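(* Let $m\ge3$ be an integer, $\beta=\frac{m+\sqrt{m^2-4}}{2}$, $\alpha=1/\beta$, and let $\mathbf U=(U_k)$ be given by $U_{-1}=0$, $U_0=1$, $U_{k+1}=mU_k-U_{k-1}$. Let $n\ge1$ with $(n)_{\mathbf U}=a_Na_{N-1}\cdots a_1a_0$, let $b_0$ be the last digit of $(n+1)_{\mathbf U}$, and let $\Delta P_\alpha(n)=P_\alpha(n+1)-P_\alpha(n)$. Then: (i) if $b_0=0$, the string $a_Na_{N-1}\cdots a_1$ is the $\mathbf U$-expansion of $n+\Delta P_\alpha(n)-1$; (ii) if $b_0\ne0$, the string $a_Na_{N-1}\cdots a_1$ is the $\mathbf U$-expansion of $\Delta P_\alpha(n)-1$. (Here the empty string is the $\mathbf U$-expansion of $0$.)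
   Context: $\mathbf U$-expansion: for $n\ge1$, $(n)_{\mathbf U}=a_N\cdots a_0$ is the unique string of non-negative integers with $a_N\ne0$, $n=\sum_{k=0}^N a_kU_k$ and $\sum_{k=0}^i a_kU_k<U_{i+1}$ for all $i\le N$ (the greedy representation); the expansion of $0$ is the empty word. For irrational $\alpha\in(0,1)$, $P_\alpha(n)$ denotes the number of factors $u$ of length $n$ of a Sturmian sequence (aperiodic binary sequence in which any two factors of equal length differ by at most $1$ in the number of occurrences of each letter) over $\{a,b\}$ with frequency of $b$ equal to $\alpha$ such that $(|u|_a,|u|_b)=(\lfloor(1-\alpha)n\rfloor,\lceil n\alpha\rceil)$; equivalently $P_\alpha(n)=\#\{k\in\{1,\dots,n\}:\{k\alpha\}\le\{n\alpha\}\}$. *)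

theory Defs
  imports Complex_Main
begin

text \<open>The sequence U with U_{-1} = 0, U_0 = 1, U_{k+1} = m U_k - U_{k-1};
  here seqU m k = U_k for k \<ge> 0 (so seqU m 1 = m).\<close>
fun seqU :: "nat \<Rightarrow> nat \<Rightarrow> int" where
  "seqU m 0 = 1"
| "seqU m (Suc 0) = int m"
| "seqU m (Suc (Suc k)) = int m * seqU m (Suc k) - seqU m k"

text \<open>A digit string a_N ... a_0 is stored least significant digit first:
  the list ds with ds ! k = a_k.  The empty list is the expansion of 0.\<close>
definition is_Uexp :: "nat \<Rightarrow> nat list \<Rightarrow> nat \<Rightarrow> bool" where
  "is_Uexp m ds n \<longleftrightarrow>
     (ds \<noteq> [] \<longrightarrow> last ds \<noteq> 0) \<and>
     int n = (\<Sum>k<length ds. int (ds ! k) * seqU m k) \<and>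
     (\<forall>i<length ds. (\<Sum>k\<le>i. int (ds ! k) * seqU m k) < seqU m (Suc i))"

definition Uexp :: "nat \<Rightarrow> nat \<Rightarrow> nat list" where
  "Uexp m n = (THE ds. is_Uexp m ds n)"

definition Pa :: "real \<Rightarrow> nat \<Rightarrow> nat" where
  "Pa \<alpha> n = card {k \<in> {1..n}. frac (real k * \<alpha>) \<le> frac (real n * \<alpha>)}"

end

theory Submission
  imports Defs
begin

lemma two_step_induct:
  assumes "P 0" "P (Suc 0)" "\<And>k. P k \<Longrightarrow> P (Suc k) \<Longrightarrow> P (Suc (Suc k))"
  shows "P k"
proof -
  have "P k \<and> P (Suc k)" by (induction k) (use assms in auto)
  then show ?thesis by simp
qed

lemma U_basic:
  assumes "m \<ge> 3"
  shows "seqU m k \<ge> 1 \<and> seqU m (Suc k) \<ge> 2 * seqU m k"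
proof (induction k)
  case 0 then show ?case using assms by simp
next
  case (Suc k)
  have a: "seqU m (Suc k) \<ge> 1" using Suc by linarith
  have "int m * seqU m (Suc k) \<ge> 3 * seqU m (Suc k)"
    using assms a by (intro mult_right_mono) auto
  moreover have "seqU m (Suc (Suc k)) = int m * seqU m (Suc k) - seqU m k" by simp
  ultimately show ?case using Suc by linarith
qed

lemma U_pos: "m \<ge> 3 \<Longrightarrow> seqU m k \<ge> 1" using U_basic by blast
lemma U_step: "m \<ge> 3 \<Longrightarrow> seqU m k < seqU m (Suc k)"
  using U_basic[of m k] by linarith

lemma U_mono_lt: "m \<ge> 3 \<Longrightarrow> k < j \<Longrightarrow> seqU m k < seqU m j"
proof (induction j)
  case 0 then show ?case by simp
next
  case (Suc j) then show ?case using U_step[of m j] by (cases "k = j") auto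
qed

lemma U_mono_le: "m \<ge> 3 \<Longrightarrow> k \<le> j \<Longrightarrow> seqU m k \<le> seqU m j"
  using U_mono_lt[of m k j] by (cases "k = j") auto

lemma U_gt: "m \<ge> 3 \<Longrightarrow> int k < seqU m k"
proof (induction k)
  case 0 then show ?case by simp
next
  case (Suc k) then show ?case using U_step[of m k] by simp
qed

lemma U_Suc_le: "m \<ge> 3 \<Longrightarrow> seqU m (Suc k) \<le> int m * seqU m k"
  using U_pos[of m "k - 1"] by (cases k) auto

definition Up :: "nat \<Rightarrow> nat \<Rightarrow> int" where
  "Up m k = (if k = 0 then 0 else seqU m (k - 1))"

lemma Up_rec: "Up m (Suc (Suc k)) = int m * Up m (Suc k) - Up m k"
  by (cases k) (auto simp: Up_def)

lemma U_alpha: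
  assumes aq: "\<alpha>^2 = real m * \<alpha> - 1"
  shows "real_of_int (seqU m k) * \<alpha> = real_of_int (Up m k) + \<alpha>^(Suc k)"
proof (induction k rule: two_step_induct)
  case 1 then show ?case by (simp add: Up_def)
next
  case 2 then show ?case using aq by (simp add: Up_def power2_eq_square)
next
  case (3 k)
  have "real_of_int (seqU m (Suc (Suc k))) * \<alpha>
      = real m * (real_of_int (seqU m (Suc k)) * \<alpha>) - real_of_int (seqU m k) * \<alpha>"
    by (simp add: algebra_simps)
  also have "\<dots> = real m * (real_of_int (Up m (Suc k)) + \<alpha>^(Suc (Suc k)))
        - (real_of_int (Up m k) + \<alpha>^(Suc k))" using 3 by simp
  also have "\<dots> = real_of_int (Up m (Suc (Suc k))) + \<alpha>^(Suc k) * (real m * \<alpha> - 1)"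
    by (simp add: Up_rec algebra_simps)
  also have "\<dots> = real_of_int (Up m (Suc (Suc k))) + \<alpha>^(Suc (Suc (Suc k)))"
    using aq by (simp add: power2_eq_square)
  finally show ?case .
qed
lemma U_rec': "N \<ge> 1 \<Longrightarrow> seqU m (Suc N) = int m * seqU m N - seqU m (N - 1)"
  by (cases N) auto

definition Vs :: "nat \<Rightarrow> (nat \<Rightarrow> nat) \<Rightarrow> nat \<Rightarrow> int" where
  "Vs m d N = (\<Sum>k<N. int (d k) * seqU m k)"
definition Rs :: "real \<Rightarrow> (nat \<Rightarrow> nat) \<Rightarrow> nat \<Rightarrow> real" where
  "Rs \<alpha> d N = (\<Sum>k<N. real (d k) * \<alpha>^(Suc k))"
definition Gs :: "nat \<Rightarrow> (nat \<Rightarrow> nat) \<Rightarrow> nat \<Rightarrow> bool" where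
  "Gs m d N = (\<forall>i<N. Vs m d (Suc i) < seqU m (Suc i))"

lemma Vs_0[simp]: "Vs m d 0 = 0" by (simp add: Vs_def)
lemma Rs_0[simp]: "Rs a d 0 = 0" by (simp add: Rs_def)
lemma Vs_Suc: "Vs m d (Suc N) = Vs m d N + int (d N) * seqU m N" by (simp add: Vs_def)
lemma Rs_Suc: "Rs a d (Suc N) = Rs a d N + real (d N) * a^(Suc N)" by (simp add: Rs_def)
lemma Gs_Suc: "Gs m d (Suc N) \<longleftrightarrow> Gs m d N \<and> Vs m d (Suc N) < seqU m (Suc N)"
  by (auto simp: Gs_def less_Suc_eq)
lemma Gs_le: "Gs m d N \<Longrightarrow> M \<le> N \<Longrightarrow> Gs m d M"
  by (auto simp: Gs_def)
lemma Vs_nonneg: "m \<ge> 3 \<Longrightarrow> Vs m d N \<ge> 0"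
proof -
  assume m3: "m \<ge> 3"
  have "\<And>k. seqU m k \<ge> 0" using U_pos[OF m3] by (meson order_trans zero_le_one)
  then show ?thesis unfolding Vs_def by (intro sum_nonneg) auto
qed
lemma Rs_nonneg: "a \<ge> 0 \<Longrightarrow> Rs a d N \<ge> 0"
  unfolding Rs_def by (intro sum_nonneg) auto

lemma R_bound:
  assumes m3: "m \<ge> 3" and aq: "\<alpha>^2 = real m * \<alpha> - 1" and a0: "0 < \<alpha>" and a1: "\<alpha> < 1"
  shows "Gs m d N \<Longrightarrow> Rs \<alpha> d N \<le> 1 - (1 - \<alpha>) * \<alpha>^N \<and>
     (N \<ge> 1 \<longrightarrow> Vs m d N < seqU m N - seqU m (N - 1) \<longrightarrow> Rs \<alpha> d N \<le> 1 - (2 - \<alpha>) * \<alpha>^N)"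
proof (induction N)
  case 0 then show ?case using a0 a1 by simp
next
  case (Suc N)
  have aq': "\<alpha> * \<alpha> = real m * \<alpha> - 1" using aq by (simp add: power2_eq_square)
  define x where "x = \<alpha>^N"
  have x0: "x > 0" using a0 by (simp add: x_def)
  define a where "a = d N"
  have G: "Gs m d N" and Vlt: "Vs m d (Suc N) < seqU m (Suc N)" using Suc.prems Gs_Suc by auto
  note IH = Suc.IH[OF G]
  have VS: "Vs m d (Suc N) = Vs m d N + int a * seqU m N" by (simp add: Vs_Suc a_def)
  have RS: "Rs \<alpha> d (Suc N) = Rs \<alpha> d N + real a * \<alpha> * x" by (simp add: Rs_Suc a_def x_def)
  have V0: "Vs m d N \<ge> 0" using Vs_nonneg m3 by blast
  have UN: "seqU m N \<ge> 1" using U_pos m3 by blast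
  have USl: "seqU m (Suc N) \<le> int m * seqU m N" using U_Suc_le m3 by blast
  have am: "a < m"
  proof (rule ccontr)
    assume "\<not> a < m"
    then have "int m * seqU m N \<le> int a * seqU m N" using UN by (intro mult_right_mono) auto
    then show False using VS V0 Vlt USl by linarith
  qed
  have R0: "Rs \<alpha> d 0 = 0" by simp
  have x1: "\<alpha>^(Suc N) = \<alpha> * x" by (simp add: x_def)
  have t1: "(1 - \<alpha>) * \<alpha>^(Suc N) = (1 - \<alpha>) * (\<alpha> * x)" by (simp add: x_def)
  have t2: "(2 - \<alpha>) * \<alpha>^(Suc N) = (2 - \<alpha>) * (\<alpha> * x)" by (simp add: x_def)
  have partA: "Rs \<alpha> d (Suc N) \<le> 1 - (1 - \<alpha>) * \<alpha>^(Suc N)"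
  proof (cases "a + 1 = m")
    case True
    then have ra: "real a = real m - 1" by auto
    show ?thesis
    proof (cases "N = 0")
      case True
      then show ?thesis using RS ra aq' x1 by (simp add: x_def algebra_simps)
    next
      case False
      have "int a = int m - 1" using \<open>a + 1 = m\<close> by auto
      then have "int a * seqU m N = int m * seqU m N - seqU m N" by (simp add: left_diff_distrib)
      then have "Vs m d N < seqU m N - seqU m (N - 1)"
        using VS Vlt U_rec'[of N m] False by linarith
      then have IHb: "Rs \<alpha> d N \<le> 1 - (2 - \<alpha>) * x" using IH False by (simp add: x_def)
      have e: "1 - (2 - \<alpha>) * x + real a * \<alpha> * x = 1 - (1 - \<alpha>) * (\<alpha> * x) + (\<alpha> - 1) * x"
        using aq' ra by algebra
      have "(\<alpha> - 1) * x \<le> 0" using a1 x0 by (simp add: mult_nonpos_nonneg)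
      then show ?thesis using e IHb RS t1 t2 by linarith
    qed
  next
    case False
    then have "real a \<le> real m - 2" using am by linarith
    then have b: "real a * \<alpha> * x \<le> (real m - 2) * \<alpha> * x"
      using a0 x0 by (intro mult_right_mono) auto
    have IHa: "Rs \<alpha> d N \<le> 1 - (1 - \<alpha>) * x" using IH by (simp add: x_def)
    have e: "1 - (1 - \<alpha>) * x + (real m - 2) * \<alpha> * x = 1 - (1 - \<alpha>) * (\<alpha> * x)"
      using aq' by algebra
    show ?thesis using e IHa b RS t1 t2 by linarith
  qed
  have partB: "Vs m d (Suc N) < seqU m (Suc N) - seqU m N \<Longrightarrow>
      Rs \<alpha> d (Suc N) \<le> 1 - (2 - \<alpha>) * \<alpha>^(Suc N)"
  proof -
    assume hb: "Vs m d (Suc N) < seqU m (Suc N) - seqU m N"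
    have am2: "a + 2 \<le> m"
    proof (rule ccontr)
      assume "\<not> a + 2 \<le> m"
      then have "int m - 1 \<le> int a" by linarith
      then have "(int m - 1) * seqU m N \<le> int a * seqU m N" using UN by (intro mult_right_mono) auto
      then show False using VS V0 hb USl by (simp add: algebra_simps)
    qed
    show ?thesis
    proof (cases "a + 2 = m")
      case True
      then have ra: "real a = real m - 2" by auto
      show ?thesis
      proof (cases "N = 0")
        case True
        then show ?thesis using RS ra aq' x1 by (simp add: x_def algebra_simps)
      next
        case False
        have "int a = int m - 2" using \<open>a + 2 = m\<close> by auto
        then have "int a * seqU m N = int m * seqU m N - 2 * seqU m N" by (simp add: left_diff_distrib)
        then have "Vs m d N < seqU m N - seqU m (N - 1)"
          using VS hb U_rec'[of N m] False by linarith
        then have IHb: "Rs \<alpha> d N \<le> 1 - (2 - \<alpha>) * x" using IH False by (simp add: x_def)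
        have e: "1 - (2 - \<alpha>) * x + real a * \<alpha> * x = 1 - (2 - \<alpha>) * (\<alpha> * x) + (\<alpha> - 1) * x"
          using aq' ra by algebra
        have "(\<alpha> - 1) * x \<le> 0" using a1 x0 by (simp add: mult_nonpos_nonneg)
        then show ?thesis using e IHb RS t1 t2 by linarith
      qed
    next
      case False
      then have "real a \<le> real m - 3" using am2 by linarith
      then have b: "real a * \<alpha> * x \<le> (real m - 3) * \<alpha> * x"
        using a0 x0 by (intro mult_right_mono) auto
      have IHa: "Rs \<alpha> d N \<le> 1 - (1 - \<alpha>) * x" using IH by (simp add: x_def)
      have e: "1 - (1 - \<alpha>) * x + (real m - 3) * \<alpha> * x = 1 - (2 - \<alpha>) * (\<alpha> * x)"
        using aq' by algebra
      show ?thesis using e IHa b RS t1 t2 by linarith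
    qed
  qed
  show ?case using partA partB by simp
qed


lemma Vs_alpha:
  assumes aq: "\<alpha>^2 = real m * \<alpha> - 1"
  shows "real_of_int (Vs m d N) * \<alpha> = real_of_int (Vs m (\<lambda>k. d (Suc k)) (N - 1)) + Rs \<alpha> d N"
proof (cases N)
  case 0 then show ?thesis by simp
next
  case (Suc M)
  have "real_of_int (Vs m d N) * \<alpha> = (\<Sum>k<N. real (d k) * (real_of_int (seqU m k) * \<alpha>))"
    unfolding Vs_def by (simp add: sum_distrib_right mult.assoc)
  also have "\<dots> = (\<Sum>k<N. real (d k) * real_of_int (Up m k)) + Rs \<alpha> d N"
    by (simp add: U_alpha[OF aq] Rs_def distrib_left sum.distrib)
  also have "(\<Sum>k<N. real (d k) * real_of_int (Up m k)) = real_of_int (Vs m (\<lambda>k. d (Suc k)) (N - 1))"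
    unfolding Suc sum.lessThan_Suc_shift by (simp add: Up_def Vs_def)
  finally show ?thesis .
qed

lemma floor_frac_Vs:
  assumes m3: "m \<ge> 3" and aq: "\<alpha>^2 = real m * \<alpha> - 1" and a0: "0 < \<alpha>" and a1: "\<alpha> < 1"
    and G: "Gs m d N"
  shows "\<lfloor>real_of_int (Vs m d N) * \<alpha>\<rfloor> = Vs m (\<lambda>k. d (Suc k)) (N - 1)"
    and "frac (real_of_int (Vs m d N) * \<alpha>) = Rs \<alpha> d N"
proof -
  have r0: "Rs \<alpha> d N \<ge> 0" using Rs_nonneg a0 by simp
  have "Rs \<alpha> d N \<le> 1 - (1 - \<alpha>) * \<alpha>^N" using R_bound[OF m3 aq a0 a1 G] by blast
  moreover have "(1 - \<alpha>) * \<alpha>^N > 0" using a0 a1 by simp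
  ultimately have r1: "Rs \<alpha> d N < 1" by linarith
  show f: "\<lfloor>real_of_int (Vs m d N) * \<alpha>\<rfloor> = Vs m (\<lambda>k. d (Suc k)) (N - 1)"
    unfolding Vs_alpha[OF aq] using r0 r1 by (intro floor_unique) auto
  show "frac (real_of_int (Vs m d N) * \<alpha>) = Rs \<alpha> d N"
    unfolding frac_def f by (simp add: Vs_alpha[OF aq])
qed

lemma Gs_tail:
  assumes m3: "m \<ge> 3" and aq: "\<alpha>^2 = real m * \<alpha> - 1" and a0: "0 < \<alpha>" and a1: "\<alpha> < 1"
    and G: "Gs m d N"
  shows "Gs m (\<lambda>k. d (Suc k)) (N - 1)"
  unfolding Gs_def
proof (intro allI impI)
  fix i assume i: "i < N - 1"
  have G2: "Gs m d (Suc (Suc i))" using G i by (intro Gs_le[OF G]) auto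
  have lt: "Vs m d (Suc (Suc i)) < seqU m (Suc (Suc i))" using G2 Gs_Suc by blast
  have e: "real_of_int (Vs m d (Suc (Suc i))) * \<alpha> = real_of_int (Vs m (\<lambda>k. d (Suc k)) (Suc i)) + Rs \<alpha> d (Suc (Suc i))"
    using Vs_alpha[OF aq, of d "Suc (Suc i)"] by simp
  have "real_of_int (Vs m d (Suc (Suc i))) \<le> real_of_int (seqU m (Suc (Suc i))) - 1" using lt by linarith
  then have "real_of_int (Vs m d (Suc (Suc i))) * \<alpha> \<le> (real_of_int (seqU m (Suc (Suc i))) - 1) * \<alpha>"
    using a0 by (intro mult_right_mono) auto
  also have "\<dots> = real_of_int (seqU m (Suc i)) + \<alpha>^(Suc (Suc (Suc i))) - \<alpha>"
    using U_alpha[OF aq, of "Suc (Suc i)"] by (simp add: Up_def algebra_simps)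
  also have "\<alpha>^(Suc (Suc (Suc i))) < \<alpha>^1" using a0 a1 by (subst power_strict_decreasing_iff) auto
  finally have "real_of_int (Vs m (\<lambda>k. d (Suc k)) (Suc i)) < real_of_int (seqU m (Suc i))"
    using e Rs_nonneg[of \<alpha> d "Suc (Suc i)"] a0 by simp
  then show "Vs m (\<lambda>k. d (Suc k)) (Suc i) < seqU m (Suc i)" by linarith
qed

lemma is_Uexp_iff:
  "is_Uexp m ds n \<longleftrightarrow> (ds \<noteq> [] \<longrightarrow> last ds \<noteq> 0) \<and> int n = Vs m (nth ds) (length ds) \<and> Gs m (nth ds) (length ds)"
  unfolding is_Uexp_def Vs_def Gs_def by (simp add: lessThan_Suc_atMost)


lemma Vs_cong: "(\<And>k. k < N \<Longrightarrow> d k = e k) \<Longrightarrow> Vs m d N = Vs m e N"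
  unfolding Vs_def by (intro sum.cong) auto
lemma Gs_cong: "(\<And>k. k < N \<Longrightarrow> d k = e k) \<Longrightarrow> Gs m d N = Gs m e N"
proof -
  assume h: "\<And>k. k < N \<Longrightarrow> d k = e k"
  have "\<And>i. i < N \<Longrightarrow> Vs m d (Suc i) = Vs m e (Suc i)" by (rule Vs_cong) (use h in auto)
  then show ?thesis unfolding Gs_def by auto
qed

lemma Vs_ge_last: "m \<ge> 3 \<Longrightarrow> Vs m d (Suc M) \<ge> int (d M) * seqU m M"
  using Vs_nonneg[of m d M] by (simp add: Vs_Suc)

lemma Uexp_pos:
  assumes m3: "m \<ge> 3" and E: "is_Uexp m ds n" and ne: "ds \<noteq> []"
  shows "seqU m (length ds - 1) \<le> int n"
proof -
  obtain M where L: "length ds = Suc M" using ne by (cases ds) auto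
  have l: "ds ! M \<noteq> 0" using E ne L by (simp add: is_Uexp_iff last_conv_nth)
  have "int n = Vs m (nth ds) (Suc M)" using E L by (simp add: is_Uexp_iff)
  moreover have "Vs m (nth ds) (Suc M) \<ge> int (ds ! M) * seqU m M" using Vs_ge_last[OF m3] by blast
  moreover have "int (ds ! M) * seqU m M \<ge> 1 * seqU m M"
    using l U_pos[OF m3, of M] by (intro mult_right_mono) auto
  ultimately show ?thesis using L by simp
qed

lemma Uexp_tail:
  assumes m3: "m \<ge> 3" and aq: "\<alpha>^2 = real m * \<alpha> - 1" and a0: "0 < \<alpha>" and a1: "\<alpha> < 1"
    and E: "is_Uexp m ds n" and ne: "ds \<noteq> []"
  shows "is_Uexp m (tl ds) (nat \<lfloor>real n * \<alpha>\<rfloor>)"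
    and "\<lfloor>real n * \<alpha>\<rfloor> = Vs m (nth (tl ds)) (length (tl ds))"
    and "frac (real n * \<alpha>) = Rs \<alpha> (nth ds) (length ds)"
proof -
  obtain x es where ds: "ds = x # es" using ne by (cases ds) auto
  have sh: "(\<lambda>k. ds ! Suc k) = nth es" by (auto simp: ds)
  have n: "int n = Vs m (nth ds) (length ds)" and G: "Gs m (nth ds) (length ds)"
    and la: "ds \<noteq> [] \<longrightarrow> last ds \<noteq> 0" using E by (auto simp: is_Uexp_iff)
  have rn: "real n = real_of_int (Vs m (nth ds) (length ds))" using n by (metis of_int_of_nat_eq)
  have fl: "\<lfloor>real n * \<alpha>\<rfloor> = Vs m (nth es) (length es)"
    using floor_frac_Vs(1)[OF m3 aq a0 a1 G] rn sh ds by simp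
  then show "\<lfloor>real n * \<alpha>\<rfloor> = Vs m (nth (tl ds)) (length (tl ds))" by (simp add: ds)
  show "frac (real n * \<alpha>) = Rs \<alpha> (nth ds) (length ds)"
    using floor_frac_Vs(2)[OF m3 aq a0 a1 G] rn by simp
  have Gt: "Gs m (nth es) (length es)" using Gs_tail[OF m3 aq a0 a1 G] sh ds by simp
  have nn: "Vs m (nth es) (length es) \<ge> 0" using Vs_nonneg[OF m3] by blast
  have "es \<noteq> [] \<longrightarrow> last es \<noteq> 0" using la ds by auto
  then show "is_Uexp m (tl ds) (nat \<lfloor>real n * \<alpha>\<rfloor>)"
    using Gt fl nn by (simp add: is_Uexp_iff ds)
qed

lemma Uexp_zero:
  assumes m3: "m \<ge> 3" and E: "is_Uexp m ds 0" shows "ds = []"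
proof (rule ccontr)
  assume "ds \<noteq> []"
  from Uexp_pos[OF m3 E this] U_pos[OF m3, of "length ds - 1"] show False by simp
qed

lemma Uexp_unique:
  assumes m3: "m \<ge> 3" and aq: "\<alpha>^2 = real m * \<alpha> - 1" and a0: "0 < \<alpha>" and a1: "\<alpha> < 1"
  shows "is_Uexp m ds n \<Longrightarrow> is_Uexp m es n \<Longrightarrow> ds = es"
proof (induction n arbitrary: ds es rule: less_induct)
  case (less n)
  show ?case
  proof (cases "n = 0")
    case True then show ?thesis using Uexp_zero[OF m3] less.prems by metis
  next
    case False
    have dne: "ds \<noteq> []" using less.prems(1) False by (auto simp: is_Uexp_iff)
    have ene: "es \<noteq> []" using less.prems(2) False by (auto simp: is_Uexp_iff)
    have lt: "nat \<lfloor>real n * \<alpha>\<rfloor> < n"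
    proof -
      have "real n * \<alpha> < real n" using False a1 by simp
      then have "\<lfloor>real n * \<alpha>\<rfloor> < int n" by linarith
      then show ?thesis using False by (cases "\<lfloor>real n * \<alpha>\<rfloor> < 0") (auto simp: nat_less_iff)
    qed
    have tl_eq: "tl ds = tl es"
      using less.IH[OF lt Uexp_tail(1)[OF m3 aq a0 a1 less.prems(1) dne]
                          Uexp_tail(1)[OF m3 aq a0 a1 less.prems(2) ene]] .
    obtain x xs where ds: "ds = x # xs" using dne by (cases ds) auto
    obtain y ys where es: "es = y # ys" using ene by (cases es) auto
    have xy: "xs = ys" using tl_eq ds es by simp
    have "int n = Vs m (nth ds) (length ds)" "int n = Vs m (nth es) (length es)"
      using less.prems by (auto simp: is_Uexp_iff)
    then have "Vs m (nth (x # xs)) (Suc (length xs)) = Vs m (nth (y # xs)) (Suc (length xs))"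
      using ds es xy by simp
    then have "int x = int y"
      unfolding Vs_def sum.lessThan_Suc_shift by simp
    then show ?thesis using ds es xy by simp
  qed
qed


lemma Uexp_exists:
  assumes m3: "m \<ge> 3"
  shows "\<exists>ds. is_Uexp m ds n"
proof (induction n rule: less_induct)
  case (less n)
  show ?case
  proof (cases "n = 0")
    case True
    then show ?thesis by (intro exI[of _ "[]"]) (simp add: is_Uexp_iff Gs_def)
  next
    case False
    define S where "S = {k. seqU m k \<le> int n}"
    have Ssub: "S \<subseteq> {..<n}"
    proof
      fix k assume "k \<in> S"
      then have "seqU m k \<le> int n" by (simp add: S_def)
      then show "k \<in> {..<n}" using U_gt[OF m3, of k] by simp
    qed
    have finS: "finite S" using Ssub finite_subset by blast
    have S0: "0 \<in> S" using False by (simp add: S_def)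
    define N where "N = Max S"
    have NS: "N \<in> S" using finS S0 unfolding N_def by (intro Max_in) auto
    then have UN: "seqU m N \<le> int n" by (simp add: S_def)
    have USN: "int n < seqU m (Suc N)"
    proof (rule ccontr)
      assume "\<not> int n < seqU m (Suc N)"
      then have "Suc N \<in> S" by (simp add: S_def)
      then have "Suc N \<le> N" using finS unfolding N_def by (rule Max_ge[rotated])
      then show False by simp
    qed
    define u where "u = nat (seqU m N)"
    have u1: "u \<ge> 1" and uU: "int u = seqU m N" using U_pos[OF m3, of N] by (auto simp: u_def)
    define q where "q = n div u"
    define r where "r = n mod u"
    have nqr: "n = q * u + r" by (simp add: q_def r_def)
    have ru: "r < u" using u1 by (simp add: r_def)
    have un: "u \<le> n" using UN uU by linarith
    have q1: "q \<ge> 1" using un u1 using div_le_mono[OF un, of u] by (simp add: q_def)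
    have "r < n" using ru un by simp
    then obtain es where E: "is_Uexp m es r" using less.IH by blast
    define L where "L = length es"
    have rV: "int r = Vs m (nth es) L" and Ge: "Gs m (nth es) L" using E by (auto simp: is_Uexp_iff L_def)
    have LN: "L \<le> N"
    proof (cases "es = []")
      case True then show ?thesis by (simp add: L_def)
    next
      case False
      have "seqU m (L - 1) \<le> int r" using Uexp_pos[OF m3 E False] by (simp add: L_def)
      also have "\<dots> < seqU m N" using ru uU by simp
      finally have "L - 1 < N" using U_mono_le[OF m3, of N "L - 1"] by (cases "N \<le> L - 1") auto
      then show ?thesis using False by (simp add: L_def)
    qed
    define f where "f = (\<lambda>k. if k < L then es ! k else if k = N then q else 0)"
    define ds where "ds = map f [0..<Suc N]"
    have nth_ds: "\<And>k. k < Suc N \<Longrightarrow> ds ! k = f k" by (simp add: ds_def del: upt_Suc)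
    have len: "length ds = Suc N" by (simp add: ds_def)
    have "Vs m f L = Vs m (nth es) L" by (rule Vs_cong) (simp add: f_def)
    then have Vf_L: "Vs m f L = int r" using rV by simp
    have Vf_mid: "\<And>j. L \<le> j \<Longrightarrow> j \<le> N \<Longrightarrow> Vs m f j = int r"
    proof -
      fix j assume "L \<le> j" "j \<le> N"
      then show "Vs m f j = int r"
      proof (induction j rule: dec_induct)
        case base then show ?case using Vf_L by simp
      next
        case (step j)
        then have "f j = 0" by (simp add: f_def)
        then show ?case using step by (simp add: Vs_Suc)
      qed
    qed
    have fN: "f N = q" using LN by (simp add: f_def)
    have Vf: "Vs m f (Suc N) = int n"
      using Vf_mid[OF LN order.refl] fN uU nqr by (simp add: Vs_Suc algebra_simps)
    have Gf: "Gs m f (Suc N)"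
      unfolding Gs_def
    proof (intro allI impI)
      fix i assume i: "i < Suc N"
      show "Vs m f (Suc i) < seqU m (Suc i)"
      proof (cases "i = N")
        case True then show ?thesis using Vf USN by simp
      next
        case False
        show ?thesis
        proof (cases "Suc i \<le> L")
          case True
          have "Vs m f (Suc i) = Vs m (nth es) (Suc i)" using True by (intro Vs_cong) (auto simp: f_def)
          also have "\<dots> < seqU m (Suc i)" using Ge True unfolding Gs_def by simp
          finally show ?thesis .
        next
        case nL: False
          have "Vs m f (Suc i) = int r" using nL i False by (intro Vf_mid) auto
          also have "int r < seqU m (Suc i)"
          proof (cases "L = 0")
            case True then show ?thesis using rV U_pos[OF m3, of "Suc i"] by simp
          next
            case L0: False
            have sL: "Suc (L - 1) = L" using L0 by simp
            have "Vs m (nth es) (Suc (L - 1)) < seqU m (Suc (L - 1))"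
            proof -
              have "L - 1 < L" using L0 by simp
              then show ?thesis using Ge unfolding Gs_def by blast
            qed
            then have "int r < seqU m L" using rV sL by simp
            also have "\<dots> \<le> seqU m (Suc i)" using nL by (intro U_mono_le[OF m3]) auto
            finally show ?thesis .
          qed
          finally show ?thesis .
        qed
      qed
    qed
    have "is_Uexp m ds n"
      unfolding is_Uexp_iff
    proof (intro conjI)
      show "ds \<noteq> [] \<longrightarrow> last ds \<noteq> 0" using q1 fN nth_ds[of N] len by (simp add: last_conv_nth)
      have "Vs m (nth ds) (Suc N) = Vs m f (Suc N)" by (rule Vs_cong) (simp add: nth_ds)
      then show "int n = Vs m (nth ds) (length ds)" using Vf len by simp
      have "Gs m (nth ds) (Suc N) = Gs m f (Suc N)" by (rule Gs_cong) (simp add: nth_ds)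
      then show "Gs m (nth ds) (length ds)" using Gf len by simp
    qed
    then show ?thesis by blast
  qed
qed



lemma frac_alpha: "0 < \<alpha> \<Longrightarrow> \<alpha> < (1::real) \<Longrightarrow> frac \<alpha> = \<alpha>"
  by (simp add: frac_eq)

lemma frac_step:
  assumes a0: "0 < \<alpha>" and a1: "\<alpha> < 1"
  shows "frac (real (Suc j) * \<alpha>) = (if frac (real j * \<alpha>) + \<alpha> < 1 then frac (real j * \<alpha>) + \<alpha> else frac (real j * \<alpha>) + \<alpha> - 1)"
proof -
  have "real (Suc j) * \<alpha> = real j * \<alpha> + \<alpha>" by (simp add: algebra_simps)
  then show ?thesis using frac_add[of "real j * \<alpha>" \<alpha>] frac_alpha[OF a0 a1] by simp
qed

lemma floor_step:
  assumes a0: "0 < \<alpha>" and a1: "\<alpha> < 1"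
  shows "\<lfloor>real (Suc j) * \<alpha>\<rfloor> = \<lfloor>real j * \<alpha>\<rfloor> + (if frac (real j * \<alpha>) + \<alpha> < 1 then 0 else 1)"
proof -
  have "real (Suc j) * \<alpha> = real j * \<alpha> + \<alpha>" by (simp add: algebra_simps)
  moreover have "\<lfloor>\<alpha>\<rfloor> = 0" using a0 a1 by (simp add: floor_eq_iff)
  ultimately show ?thesis using floor_add[of "real j * \<alpha>" \<alpha>] frac_alpha[OF a0 a1] by simp
qed

lemma count_wrap:
  assumes a0: "0 < \<alpha>" and a1: "\<alpha> < 1"
  shows "int (card {j \<in> {1..n}. frac (real j * \<alpha>) + \<alpha> \<ge> 1}) = \<lfloor>real (Suc n) * \<alpha>\<rfloor>"
proof (induction n)
  case 0
  have "\<lfloor>\<alpha>\<rfloor> = 0" using a0 a1 by (simp add: floor_eq_iff)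
  then show ?case by simp
next
  case (Suc n)
  let ?P = "\<lambda>j. frac (real j * \<alpha>) + \<alpha> \<ge> 1"
  have e: "{j \<in> {1..Suc n}. ?P j} = {j \<in> {1..n}. ?P j} \<union> (if ?P (Suc n) then {Suc n} else {})"
    by (auto simp: le_Suc_eq)
  have "card {j \<in> {1..Suc n}. ?P j} = card {j \<in> {1..n}. ?P j} + (if ?P (Suc n) then 1 else 0)"
    unfolding e by (subst card_Un_disjoint) auto
  then show ?case using Suc floor_step[OF a0 a1, of "Suc n"] by auto
qed

lemma Pa_shift:
  "Pa \<alpha> (Suc n) = card {j \<in> {0..n}. frac (real (Suc j) * \<alpha>) \<le> frac (real (Suc n) * \<alpha>)}"
proof -
  have "{k \<in> {1..Suc n}. frac (real k * \<alpha>) \<le> frac (real (Suc n) * \<alpha>)}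
      = Suc ` {j \<in> {0..n}. frac (real (Suc j) * \<alpha>) \<le> frac (real (Suc n) * \<alpha>)}"
  proof (intro equalityI subsetI)
    fix k assume k: "k \<in> {k \<in> {1..Suc n}. frac (real k * \<alpha>) \<le> frac (real (Suc n) * \<alpha>)}"
    then have "k = Suc (k - 1)" by auto
    moreover have "k - 1 \<in> {j \<in> {0..n}. frac (real (Suc j) * \<alpha>) \<le> frac (real (Suc n) * \<alpha>)}"
      using k by (subst (asm) \<open>k = Suc (k - 1)\<close>) auto
    ultimately show "k \<in> Suc ` {j \<in> {0..n}. frac (real (Suc j) * \<alpha>) \<le> frac (real (Suc n) * \<alpha>)}"
      by (metis imageI)
  qed auto
  then show ?thesis unfolding Pa_def by (simp add: card_image)
qed

lemma DeltaP:
  assumes a0: "0 < \<alpha>" and a1: "\<alpha> < 1"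
  shows "frac (real n * \<alpha>) + \<alpha> < 1 \<Longrightarrow>
           int (Pa \<alpha> (Suc n)) - int (Pa \<alpha> n) = 1 + \<lfloor>real (Suc n) * \<alpha>\<rfloor>"
    and "frac (real n * \<alpha>) + \<alpha> \<ge> 1 \<Longrightarrow>
           int (Pa \<alpha> (Suc n)) - int (Pa \<alpha> n) = \<lfloor>real (Suc n) * \<alpha>\<rfloor> - int n"
proof -
  define x where "x = (\<lambda>j. frac (real j * \<alpha>))"
  define c where "c = x n"
  have xs: "\<And>j. x (Suc j) = (if x j + \<alpha> < 1 then x j + \<alpha> else x j + \<alpha> - 1)"
    unfolding x_def by (rule frac_step[OF a0 a1])
  have x01: "\<And>j. 0 \<le> x j \<and> x j < 1" by (simp add: x_def frac_lt_1)
  have x0: "x 0 = 0" by (simp add: x_def)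
  have x1: "x (Suc 0) = \<alpha>" using xs[of 0] x0 a1 by simp
  have c01: "0 \<le> c" "c < 1" using x01[of n] by (auto simp: c_def)
  define B where "B = {j \<in> {1..n}. x j \<le> c}"
  define D where "D = {j \<in> {1..n}. x j + \<alpha> \<ge> 1}"
  define E where "E = {j \<in> {1..n}. x j + \<alpha> < 1}"
  have PaB: "Pa \<alpha> n = card B" by (simp add: Pa_def B_def x_def c_def)
  have PaS: "Pa \<alpha> (Suc n) = card {j \<in> {0..n}. x (Suc j) \<le> x (Suc n)}"
    using Pa_shift by (simp add: x_def)
  have cD: "int (card D) = \<lfloor>real (Suc n) * \<alpha>\<rfloor>" unfolding D_def x_def by (rule count_wrap[OF a0 a1])
  have DE: "card D + card E = n"
  proof -
    have "D \<union> E = {1..n}" "D \<inter> E = {}" by (auto simp: D_def E_def)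
    then show ?thesis using card_Un_disjoint[of D E] by (simp add: D_def E_def)
  qed
  show "frac (real n * \<alpha>) + \<alpha> < 1 \<Longrightarrow> int (Pa \<alpha> (Suc n)) - int (Pa \<alpha> n) = 1 + \<lfloor>real (Suc n) * \<alpha>\<rfloor>"
  proof -
    assume h: "frac (real n * \<alpha>) + \<alpha> < 1"
    then have hc: "c + \<alpha> < 1" by (simp add: c_def x_def)
    have xn: "x (Suc n) = c + \<alpha>" using xs[of n] hc by (simp add: c_def)
    have "{j \<in> {0..n}. x (Suc j) \<le> x (Suc n)} = insert 0 (B \<union> D)"
    proof (intro equalityI subsetI)
      fix j assume "j \<in> {j \<in> {0..n}. x (Suc j) \<le> x (Suc n)}"
      then have j: "j \<le> n" "x (Suc j) \<le> c + \<alpha>" using xn by auto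
      show "j \<in> insert 0 (B \<union> D)"
      proof (cases "j = 0")
        case False
        show ?thesis
        proof (cases "x j + \<alpha> < 1")
          case True
          then have "x j \<le> c" using j xs[of j] by simp
          then show ?thesis using False j by (simp add: B_def)
        next
          case False
          then show ?thesis using \<open>j \<noteq> 0\<close> j by (simp add: D_def)
        qed
      qed simp
    next
      fix j assume jj: "j \<in> insert 0 (B \<union> D)"
      have "j \<le> n" using jj by (auto simp: B_def D_def)
      moreover have "x (Suc j) \<le> c + \<alpha>"
      proof (cases "j = 0")
        case True then show ?thesis using x1 c01 by simp
      next
        case False
        then have "j \<in> B \<or> j \<in> D" using jj by simp
        then show ?thesis
        proof
          assume "j \<in> B"
          then have "x j \<le> c" by (simp add: B_def)
          then have "x j + \<alpha> < 1" using hc by linarith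
          then show ?thesis using xs[of j] \<open>x j \<le> c\<close> by simp
        next
          assume "j \<in> D"
          then have "x j + \<alpha> \<ge> 1" by (simp add: D_def)
          then show ?thesis using xs[of j] x01[of j] c01 by simp
        qed
      qed
      ultimately show "j \<in> {j \<in> {0..n}. x (Suc j) \<le> x (Suc n)}" using xn by simp
    qed
    moreover have "B \<inter> D = {}" using hc by (auto simp: B_def D_def)
    moreover have "0 \<notin> B \<union> D" by (auto simp: B_def D_def)
    moreover have "finite B" "finite D" by (auto simp: B_def D_def)
    ultimately have "Pa \<alpha> (Suc n) = Suc (card B + card D)"
      using PaS by (simp add: card_Un_disjoint)
    then show ?thesis using PaB cD by simp
  qed
  show "frac (real n * \<alpha>) + \<alpha> \<ge> 1 \<Longrightarrow> int (Pa \<alpha> (Suc n)) - int (Pa \<alpha> n) = \<lfloor>real (Suc n) * \<alpha>\<rfloor> - int n"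
  proof -
    assume h: "frac (real n * \<alpha>) + \<alpha> \<ge> 1"
    then have hc: "c + \<alpha> \<ge> 1" by (simp add: c_def x_def)
    have xn: "x (Suc n) = c + \<alpha> - 1" using xs[of n] hc by (simp add: c_def)
    define A where "A = {j \<in> {1..n}. x j \<le> c \<and> x j + \<alpha> \<ge> 1}"
    have "{j \<in> {0..n}. x (Suc j) \<le> x (Suc n)} = A"
    proof (intro equalityI subsetI)
      fix j assume "j \<in> {j \<in> {0..n}. x (Suc j) \<le> x (Suc n)}"
      then have j: "j \<le> n" "x (Suc j) \<le> c + \<alpha> - 1" using xn by auto
      show "j \<in> A"
      proof (cases "j = 0")
        case True
        then show ?thesis using j x1 c01 by simp
      next
        case False
        show ?thesis
        proof (cases "x j + \<alpha> < 1")
          case True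
          then have "x (Suc j) = x j + \<alpha>" using xs[of j] by simp
          then show ?thesis using j x01[of j] c01 by simp
        next
          case nw: False
          then have "x (Suc j) = x j + \<alpha> - 1" using xs[of j] by simp
          then have "x j \<le> c" using j by simp
          then show ?thesis using nw False j by (simp add: A_def)
        qed
      qed
    next
      fix j assume "j \<in> A"
      then have j: "1 \<le> j" "j \<le> n" "x j \<le> c" "x j + \<alpha> \<ge> 1" by (auto simp: A_def)
      then have "x (Suc j) = x j + \<alpha> - 1" using xs[of j] by simp
      then show "j \<in> {j \<in> {0..n}. x (Suc j) \<le> x (Suc n)}" using xn j by simp
    qed
    then have PA: "Pa \<alpha> (Suc n) = card A" using PaS by simp
    have "B = A \<union> E" "A \<inter> E = {}" using hc by (auto simp: A_def B_def E_def)
    moreover have "finite A" "finite E" by (auto simp: A_def E_def)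
    ultimately have "card B = card A + card E" using card_Un_disjoint[of A E] by simp
    then show ?thesis using PA PaB cD DE by linarith
  qed
qed


lemma Rs_shift: "Rs \<alpha> d (Suc M) = real (d 0) * \<alpha> + \<alpha> * Rs \<alpha> (\<lambda>k. d (Suc k)) M"
  unfolding Rs_def sum.lessThan_Suc_shift by (simp add: sum_distrib_left algebra_simps)

lemma Rs_ge_first: "0 \<le> \<alpha> \<Longrightarrow> Rs \<alpha> d (Suc M) \<ge> real (d 0) * \<alpha>"
  using Rs_shift[of \<alpha> d M] Rs_nonneg[of \<alpha> "\<lambda>k. d (Suc k)" M] by simp

lemma Uexp_eq:
  assumes m3: "m \<ge> 3" and aq: "\<alpha>^2 = real m * \<alpha> - 1" and a0: "0 < \<alpha>" and a1: "\<alpha> < 1"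
    and E: "is_Uexp m ds n"
  shows "Uexp m n = ds"
  unfolding Uexp_def using E Uexp_unique[OF m3 aq a0 a1] by (intro the_equality) auto

lemma alpha_props:
  assumes m3: "m \<ge> 3" and b: "\<beta> = (real m + sqrt (real m ^ 2 - 4)) / 2" and a: "\<alpha> = 1 / \<beta>"
  shows "\<alpha>^2 = real m * \<alpha> - 1" "0 < \<alpha>" "\<alpha> < 1"
proof -
  define s where "s = sqrt (real m ^ 2 - 4)"
  have "real m \<ge> 3" using m3 by simp
  then have "real m ^ 2 \<ge> 3 ^ 2" by (intro power_mono) auto
  then have "9 \<le> real m ^ 2" by simp
  then have m4: "real m ^ 2 - 4 \<ge> 0" by linarith
  have s0: "s \<ge> 0" using m4 by (simp add: s_def)
  have s2: "s^2 = real m ^ 2 - 4" using m4 by (simp add: s_def)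
  have bs: "\<beta> = (real m + s) / 2" using b by (simp add: s_def)
  have b1: "\<beta> > 1" using bs s0 \<open>real m \<ge> 3\<close> by simp
  have bq: "\<beta>^2 = real m * \<beta> - 1" using bs s2 by (simp add: power2_eq_square field_simps) algebra
  show "0 < \<alpha>" using a b1 by simp
  show "\<alpha> < 1" using a b1 by simp
  have "\<alpha>^2 * \<beta>^2 = (real m * \<alpha> - 1) * \<beta>^2"
    using a b1 bq by (simp add: power2_eq_square field_simps)
  then show "\<alpha>^2 = real m * \<alpha> - 1" using b1 by simp
qed

theorem corollary1:
  fixes m n :: nat and \<alpha> \<beta> :: real
  assumes "m \<ge> 3"
    and "\<beta> = (real m + sqrt (real m ^ 2 - 4)) / 2"
    and "\<alpha> = 1 / \<beta>"
    and "n \<ge> 1"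
  defines "\<Delta>P \<equiv> int (Pa \<alpha> (n + 1)) - int (Pa \<alpha> n)"
  shows "(hd (Uexp m (n + 1)) = 0 \<longrightarrow>
            int n + \<Delta>P - 1 \<ge> 0 \<and> tl (Uexp m n) = Uexp m (nat (int n + \<Delta>P - 1)))
       \<and> (hd (Uexp m (n + 1)) \<noteq> 0 \<longrightarrow>
            \<Delta>P - 1 \<ge> 0 \<and> tl (Uexp m n) = Uexp m (nat (\<Delta>P - 1)))"
proof -
  note m3 = assms(1)
  note ap = alpha_props[OF assms(1,2,3)]
  note aq = ap(1) and a0 = ap(2) and a1 = ap(3)
  obtain ds where Ed: "is_Uexp m ds n" using Uexp_exists[OF m3] by blast
  obtain es where Ee: "is_Uexp m es (Suc n)" using Uexp_exists[OF m3] by blast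
  have Ud: "Uexp m n = ds" by (rule Uexp_eq[OF m3 aq a0 a1 Ed])
  have Ue: "Uexp m (Suc n) = es" by (rule Uexp_eq[OF m3 aq a0 a1 Ee])
  have dne: "ds \<noteq> []" using Ed assms(4) by (auto simp: is_Uexp_iff)
  have ene: "es \<noteq> []" using Ee by (auto simp: is_Uexp_iff)
  define T where "T = \<lfloor>real n * \<alpha>\<rfloor>"
  have T0: "T \<ge> 0" using a0 by (simp add: T_def)
  have tlU: "Uexp m (nat T) = tl ds"
    using Uexp_eq[OF m3 aq a0 a1 Uexp_tail(1)[OF m3 aq a0 a1 Ed dne]] by (simp add: T_def)
  have fr1: "frac (real (Suc n) * \<alpha>) = Rs \<alpha> (nth es) (length es)"
    using Uexp_tail(3)[OF m3 aq a0 a1 Ee ene] by simp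
  obtain y ys where es: "es = y # ys" using ene by (cases es) auto
  have hd: "hd (Uexp m (n + 1)) = y" using Ue es by simp
  have fs: "frac (real (Suc n) * \<alpha>) = (if frac (real n * \<alpha>) + \<alpha> < 1 then frac (real n * \<alpha>) + \<alpha> else frac (real n * \<alpha>) + \<alpha> - 1)"
    by (rule frac_step[OF a0 a1])
  have fl: "\<lfloor>real (Suc n) * \<alpha>\<rfloor> = T + (if frac (real n * \<alpha>) + \<alpha> < 1 then 0 else 1)"
    unfolding T_def by (rule floor_step[OF a0 a1])
  have fn01: "0 \<le> frac (real n * \<alpha>)" "frac (real n * \<alpha>) < 1" by (auto simp: frac_lt_1)
  show ?thesis
  proof (cases "y = 0")
    case True
    have Rsh: "Rs \<alpha> (nth es) (length es) = \<alpha> * Rs \<alpha> (nth ys) (length ys)"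
      using Rs_shift[of \<alpha> "nth es" "length ys"] True es by simp
    have "Rs \<alpha> (nth ys) (length ys) < 1"
    proof (cases "ys = []")
      case True then show ?thesis by simp
    next
      case False
      have "is_Uexp m ys (nat \<lfloor>real (Suc n) * \<alpha>\<rfloor>)"
        using Uexp_tail(1)[OF m3 aq a0 a1 Ee ene] es by simp
      from Uexp_tail(3)[OF m3 aq a0 a1 this False] frac_lt_1 show ?thesis by metis
    qed
    then have lt: "frac (real (Suc n) * \<alpha>) < \<alpha>" using fr1 Rsh a0 by simp
    have w: "\<not> frac (real n * \<alpha>) + \<alpha> < 1"
    proof
      assume h: "frac (real n * \<alpha>) + \<alpha> < 1"
      then have "frac (real (Suc n) * \<alpha>) = frac (real n * \<alpha>) + \<alpha>" using fs by presburger
      then show False using lt fn01 by linarith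
    qed
    have "\<Delta>P = \<lfloor>real (Suc n) * \<alpha>\<rfloor> - int n"
      using DeltaP(2)[OF a0 a1, of n] w unfolding \<Delta>P_def by simp
    then have "int n + \<Delta>P - 1 = T" using fl w by simp
    then show ?thesis using hd True T0 tlU Ud by simp
  next
    case False
    have "Rs \<alpha> (nth es) (length es) \<ge> real y * \<alpha>"
      using Rs_ge_first[of \<alpha> "nth es" "length ys"] a0 es by simp
    moreover have "real y * \<alpha> \<ge> 1 * \<alpha>" using False a0 by (intro mult_right_mono) auto
    ultimately have ge: "frac (real (Suc n) * \<alpha>) \<ge> \<alpha>" using fr1 by simp
    have w: "frac (real n * \<alpha>) + \<alpha> < 1"
    proof (rule ccontr)
      assume h: "\<not> frac (real n * \<alpha>) + \<alpha> < 1"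
      then have "frac (real (Suc n) * \<alpha>) = frac (real n * \<alpha>) + \<alpha> - 1" using fs by presburger
      then show False using ge fn01 by linarith
    qed
    have "\<Delta>P = 1 + \<lfloor>real (Suc n) * \<alpha>\<rfloor>"
      using DeltaP(1)[OF a0 a1, of n] w unfolding \<Delta>P_def by simp
    then have "\<Delta>P - 1 = T" using fl w by simp
    then show ?thesis using hd False T0 tlU Ud by simp
  qed
qed

end
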